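(* Let $f:X\to Y$ be a continuous surjective map between compact Hausdorff spaces. Then for all $\mu,\nu\in HX$ and $t\in[0,1]$ we have $e(Hf(\mu),Hf(\nu),t)=Hf(e(\mu,\nu,t))$.
   Context: For a compact Hausdorff space $X$, let $HM(X)$ be the set of all maps $\alpha:[0,1)\to X$ for which there exist $0=t_0<t_1<\dots<t_n=1$ such that $\alpha$ is constant on each $[t_i,t_{i+1})$. Let $C(X)$ be the set of continuous real-valued functions on $X$. For $\varphi\in C(X)$ and $0\le a<b\le 1$ define $\varphi_{(a,b)}:HM(X)\to\mathbb{R}$ by $\varphi_{(a,b)}(\alpha)=\frac{1}{b-a}\int_a^b\varphi(\alpha(t))\,dt$, and let $S_{HM}(X)$ be the set of all such functions. The map $\alpha\mapsto(\varphi_{(a,b)}(\alpha))$ embeds $HM(X)$ into the product $\prod_{\varphi_{(a,b)}\in S_{HM}(X)}[\min\varphi,\max\varphi]$; $HX$ is the closure of the image of $HM(X)$, and $p_{\varphi_{(a,b)}}:HX\to\mathbb{R}$ is the coordinate projection. For continuous $f:X\to Y$, $Hf:HX\to HY$ is the unique continuous map with $p_{\varphi_{(a,b)}}\circ Hf=p_{(\varphi\circ f)_{(a,b)}}$ for all $\varphi\in C(Y)$, $0\le a<b\le1$ (it extends $\alpha\mapsto f\circ\alpha$). The map $e_1:HM(X)\times HM(X)\times[0,1]\to HM(X)$ is given by $e_1(\alpha_1,\alpha_2,t)(l)=\alpha_1(l)$ if $l<t$ and $=\alpha_2(l)$ if $l\ge t$; $e:HX\times HX\times[0,1]\to HX$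 denotes its (unique) continuous extension. *)

theory Defs
  imports "HOL-Analysis.Analysis"
begin

text \<open>HM(X): maps [0,1) -> X that are piecewise constant on finitely many
  half-open intervals [t_i, t_(i+1)) with 0 = t_0 < ... < t_n = 1.
  Paths are total functions real => 'a; only their values on [0,1) matter.\<close>
definition HM :: "'a topology \<Rightarrow> (real \<Rightarrow> 'a) set" where
  "HM X = {\<alpha>. \<alpha> ` {0..<1} \<subseteq> topspace X \<and>
     (\<exists>(n::nat) (tt::nat \<Rightarrow> real). tt 0 = 0 \<and> tt n = 1 \<and>
        (\<forall>i<n. tt i < tt (Suc i)) \<and>
        (\<forall>i<n. \<forall>l\<in>{tt i..<tt (Suc i)}. \<alpha> l = \<alpha> (tt i)))}"

definition avg :: "'a topology \<Rightarrow> ('a \<Rightarrow> real) \<Rightarrow> real \<Rightarrow> real \<Rightarrow> (real \<Rightarrow> 'a) \<Rightarrow> real" where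
  "avg X \<phi> a b = restrict (\<lambda>\<alpha>. (1 / (b - a)) * integral {a..b} (\<lambda>l. \<phi> (\<alpha> l))) (HM X)"

definition SHM :: "'a topology \<Rightarrow> ((real \<Rightarrow> 'a) \<Rightarrow> real) set" where
  "SHM X = {avg X \<phi> a b | \<phi> a b. continuous_map X euclideanreal \<phi> \<and> 0 \<le> a \<and> a < b \<and> b \<le> 1}"

definition emb :: "'a topology \<Rightarrow> (real \<Rightarrow> 'a) \<Rightarrow> ((real \<Rightarrow> 'a) \<Rightarrow> real) \<Rightarrow> real" where
  "emb X \<alpha> = restrict (\<lambda>s. s \<alpha>) (SHM X)"

text \<open>HX as a topological space: the closure of the image of HM(X) in the product
  (taken in the product of the real lines; since the product of the intervals
  [min phi, max phi] is closed and contains the image, closure and subspace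
  topology coincide with those taken in the product of intervals).\<close>
definition HXtop :: "'a topology \<Rightarrow> (((real \<Rightarrow> 'a) \<Rightarrow> real) \<Rightarrow> real) topology" where
  "HXtop X = subtopology (product_topology (\<lambda>_. euclideanreal) (SHM X))
      ((product_topology (\<lambda>_. euclideanreal) (SHM X)) closure_of (emb X ` HM X))"

definition Hf :: "'a topology \<Rightarrow> 'b topology \<Rightarrow> ('a \<Rightarrow> 'b) \<Rightarrow>
    (((real \<Rightarrow> 'a) \<Rightarrow> real) \<Rightarrow> real) \<Rightarrow> (((real \<Rightarrow> 'b) \<Rightarrow> real) \<Rightarrow> real)" where
  "Hf X Y f = (SOME g. continuous_map (HXtop X) (HXtop Y) g \<and>
      (\<forall>\<phi> a b. continuous_map Y euclideanreal \<phi> \<and> 0 \<le> a \<and> a < b \<and> b \<le> 1 \<longrightarrow>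
         (\<forall>\<mu>\<in>topspace (HXtop X). g \<mu> (avg Y \<phi> a b) = \<mu> (avg X (\<phi> \<circ> f) a b))))"

definition e1 :: "(real \<Rightarrow> 'a) \<Rightarrow> (real \<Rightarrow> 'a) \<Rightarrow> real \<Rightarrow> real \<Rightarrow> 'a" where
  "e1 \<alpha>1 \<alpha>2 t = (\<lambda>l. if l < t then \<alpha>1 l else \<alpha>2 l)"

definition ext_e :: "'a topology \<Rightarrow>
    ((((real \<Rightarrow> 'a) \<Rightarrow> real) \<Rightarrow> real) \<times> ((((real \<Rightarrow> 'a) \<Rightarrow> real) \<Rightarrow> real) \<times> real))
      \<Rightarrow> (((real \<Rightarrow> 'a) \<Rightarrow> real) \<Rightarrow> real)" where
  "ext_e X = (SOME g.
      continuous_map (prod_topology (HXtop X) (prod_topology (HXtop X) (top_of_set {0..1}))) (HXtop X) g \<and>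
      (\<forall>\<alpha>1\<in>HM X. \<forall>\<alpha>2\<in>HM X. \<forall>t\<in>{0..1}. g (emb X \<alpha>1, (emb X \<alpha>2, t)) = emb X (e1 \<alpha>1 \<alpha>2 t)))"

end

theory Submission
  imports Defs
begin

lemma tt_mono:
  assumes "\<forall>i<n. tt i < tt (Suc i)" "i < j" "j \<le> n"
  shows "(tt i::real) < tt j"
  using assms(2,3)
proof (induction j)
  case 0 then show ?case by simp
next
  case (Suc j)
  then show ?case using assms(1)
    by (metis less_Suc_eq less_trans Suc_le_lessD order_less_imp_le)
qed

lemma tt_le:
  assumes "\<forall>i<n. tt i < tt (Suc i)" "i \<le> j" "j \<le> n"
  shows "(tt i::real) \<le> tt j"
  using tt_mono[OF assms(1)] assms(2,3) by (cases "i = j") (auto intro: less_imp_le)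

definition stepset :: "(real \<Rightarrow> 'a) \<Rightarrow> real set \<Rightarrow> bool" where
  "stepset \<alpha> T \<longleftrightarrow> finite T \<and> T \<subseteq> {0..1} \<and> 0 \<in> T \<and> 1 \<in> T \<and>
     (\<forall>c\<in>T. \<forall>l. c \<le> l \<and> l < 1 \<and> (\<forall>s\<in>T. s \<le> c \<or> l < s) \<longrightarrow> \<alpha> l = \<alpha> c)"

lemma stepset_const:
  assumes "stepset \<alpha> T" "0 \<le> c" "c \<le> l" "l < 1" "\<forall>s\<in>T. s \<le> c \<or> l < s"
  shows "\<alpha> l = \<alpha> c"
proof -
  let ?S = "{s\<in>T. s \<le> c}"
  have fin: "finite ?S" "?S \<noteq> {}" using assms(1,2) unfolding stepset_def by auto
  define c' where "c' = Max ?S"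
  have c'T: "c' \<in> T" "c' \<le> c" using Max_in[OF fin] unfolding c'_def by auto
  have mx: "\<forall>s\<in>T. s \<le> c \<longrightarrow> s \<le> c'" using Max_ge[OF fin(1)] unfolding c'_def by auto
  have P: "\<And>l. c' \<le> l \<Longrightarrow> l < 1 \<Longrightarrow> (\<forall>s\<in>T. s \<le> c' \<or> l < s) \<Longrightarrow> \<alpha> l = \<alpha> c'"
    using assms(1) c'T unfolding stepset_def by blast
  have "\<alpha> l = \<alpha> c'"
  proof (rule P)
    show "c' \<le> l" "l < 1" using c'T assms by auto
    show "\<forall>s\<in>T. s \<le> c' \<or> l < s" using mx assms(5) by blast
  qed
  moreover have "\<alpha> c = \<alpha> c'"
  proof (rule P)
    show "c' \<le> c" "c < 1" using c'T assms by auto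
    show "\<forall>s\<in>T. s \<le> c' \<or> c < s" using mx by force
  qed
  ultimately show ?thesis by simp
qed

lemma HM_stepset:
  assumes "\<alpha> \<in> HM X"
  shows "\<exists>T. stepset \<alpha> T"
proof -
  obtain n tt where tt: "tt 0 = 0" "tt n = 1" "\<forall>i<n. tt i < tt (Suc i)"
     "\<forall>i<n. \<forall>l\<in>{tt i..<tt (Suc i)}. \<alpha> l = \<alpha> (tt i)"
    using assms unfolding HM_def by blast
  let ?T = "tt ` {..n}"
  have "stepset \<alpha> ?T"
    unfolding stepset_def
  proof (intro conjI ballI allI impI)
    show "finite ?T" by simp
    show "?T \<subseteq> {0..1}"
    proof
      fix x assume "x \<in> ?T"
      then obtain i where "i \<le> n" "x = tt i" by auto
      then show "x \<in> {0..1}" using tt_le[OF tt(3), of 0 i] tt_le[OF tt(3), of i n] tt(1,2) by auto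
    qed
    show "0 \<in> ?T" using tt(1) by force
    show "1 \<in> ?T" using tt(2) by force
  next
    fix c l assume c: "c \<in> ?T" and h: "c \<le> l \<and> l < 1 \<and> (\<forall>s\<in>?T. s \<le> c \<or> l < s)"
    then obtain i where i: "i \<le> n" "c = tt i" by auto
    have hc: "c \<le> l" and hl: "l < 1" using h by auto
    have "i < n" using i hc hl tt(2) by (metis le_neq_implies_less not_le)
    then have "\<not> tt (Suc i) \<le> c" using tt(3) i by auto
    moreover have "tt (Suc i) \<in> ?T" using \<open>i<n\<close> by auto
    ultimately have "l < tt (Suc i)" using h by blast
    then have "l \<in> {tt i..<tt (Suc i)}" using hc i by simp
    then show "\<alpha> l = \<alpha> c" using tt(4) \<open>i<n\<close> i(2) by blast
  qed
  then show ?thesis by blast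
qed

lemma stepset_HM:
  assumes "stepset \<alpha> T" "\<alpha> ` {0..<1} \<subseteq> topspace X"
  shows "\<alpha> \<in> HM X"
proof -
  define xs where "xs = sorted_list_of_set T"
  have fin: "finite T" and T01: "T \<subseteq> {0..1}" and T0: "0 \<in> T" and T1: "1 \<in> T"
    using assms(1) unfolding stepset_def by auto
  have sxs: "sorted_wrt (<) xs" and dxs: "distinct xs" and setxs: "set xs = T"
    using fin unfolding xs_def by auto
  define n where "n = length xs - 1"
  have len: "length xs = Suc n" using setxs T0 unfolding n_def
    by (metis Suc_pred' empty_iff length_greater_0_conv list.set(1))
  define tt where "tt i = xs ! i" for i
  have mono: "\<And>i j. i < j \<Longrightarrow> j \<le> n \<Longrightarrow> tt i < tt j"
    unfolding tt_def using sxs len by (simp add: sorted_wrt_iff_nth_less)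
  have inT: "\<And>i. i \<le> n \<Longrightarrow> tt i \<in> T" unfolding tt_def using len setxs
    by (metis le_imp_less_Suc nth_mem)
  have allT: "\<And>s. s \<in> T \<Longrightarrow> \<exists>i\<le>n. s = tt i" unfolding tt_def using len setxs
    by (metis in_set_conv_nth less_Suc_eq_le)
  have t0: "tt 0 = 0"
  proof -
    obtain i where "i \<le> n" "tt i = 0" using allT[OF T0] by metis
    moreover have "tt 0 \<ge> 0" using inT[of 0] T01 by auto
    ultimately show ?thesis using mono[of 0 i] by (cases i) auto
  qed
  have tn: "tt n = 1"
  proof -
    obtain i where "i \<le> n" "tt i = 1" using allT[OF T1] by metis
    moreover have "tt n \<le> 1" using inT[of n] T01 by auto
    ultimately show ?thesis using mono[of i n] by (cases "i = n") auto
  qed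
  have "\<forall>i<n. \<forall>l\<in>{tt i..<tt (Suc i)}. \<alpha> l = \<alpha> (tt i)"
  proof (intro allI impI ballI)
    fix i l assume i: "i < n" and l: "l \<in> {tt i..<tt (Suc i)}"
    have "tt (Suc i) \<le> 1" using inT[of "Suc i"] i T01 by auto
    moreover have "\<forall>s\<in>T. s \<le> tt i \<or> l < s"
    proof
      fix s assume "s \<in> T"
      then obtain j where j: "j \<le> n" "s = tt j" using allT by metis
      show "s \<le> tt i \<or> l < s"
      proof (cases "j \<le> i")
        case True then show ?thesis using mono[of j i] i j by (cases "j = i") auto
      next
        case False then show ?thesis using mono[of "Suc i" j] i j l by (cases "j = Suc i") auto
      qed
    qed
    ultimately show "\<alpha> l = \<alpha> (tt i)" using assms(1) inT[of i] i l unfolding stepset_def by auto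
  qed
  moreover have "\<forall>i<n. tt i < tt (Suc i)" using mono by simp
  ultimately show ?thesis unfolding HM_def using assms(2) t0 tn by blast
qed

lemma e1_HM:
  assumes "\<alpha> \<in> HM X" "\<beta> \<in> HM X" "t \<in> {0..1}"
  shows "e1 \<alpha> \<beta> t \<in> HM X"
proof -
  obtain A B where A: "stepset \<alpha> A" and B: "stepset \<beta> B" using HM_stepset assms by metis
  let ?T = "A \<union> B \<union> {t}"
  have "stepset (e1 \<alpha> \<beta> t) ?T"
    unfolding stepset_def
  proof (intro conjI ballI allI impI)
    show "finite ?T" "?T \<subseteq> {0..1}" "0 \<in> ?T" "1 \<in> ?T" using A B assms(3) unfolding stepset_def by auto
  next
    fix c l assume c: "c \<in> ?T" and h: "c \<le> l \<and> l < 1 \<and> (\<forall>s\<in>?T. s \<le> c \<or> l < s)"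
    have c0: "0 \<le> c" using c A B assms(3) unfolding stepset_def by auto
    show "e1 \<alpha> \<beta> t l = e1 \<alpha> \<beta> t c"
    proof (cases "c < t")
      case True
      then have "l < t" using h by auto
      then show ?thesis using True stepset_const[OF A c0] h unfolding e1_def by auto
    next
      case False
      then have "\<not> l < t" using h by auto
      then show ?thesis using False stepset_const[OF B c0] h unfolding e1_def by auto
    qed
  qed
  moreover have "e1 \<alpha> \<beta> t ` {0..<1} \<subseteq> topspace X"
    using assms(1,2) unfolding HM_def e1_def by auto
  ultimately show ?thesis using stepset_HM by blast
qed

lemma HM_integrable:
  fixes \<phi> :: "'a \<Rightarrow> real"
  assumes "\<alpha> \<in> HM X"
  shows "(\<lambda>l. \<phi> (\<alpha> l)) integrable_on {0..1}"
proof -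
  obtain n tt where tt: "tt 0 = 0" "tt n = 1" "\<forall>i<n. tt i < tt (Suc i)"
     "\<forall>i<n. \<forall>l\<in>{tt i..<tt (Suc i)}. \<alpha> l = \<alpha> (tt i)"
    using assms unfolding HM_def by blast
  have "k \<le> n \<Longrightarrow> (\<lambda>l. \<phi> (\<alpha> l)) integrable_on {0..tt k}" for k
  proof (induction k)
    case 0 then show ?case using tt(1) integrable_on_refl[of "\<lambda>l. \<phi> (\<alpha> l)" "0::real"] by simp
  next
    case (Suc k)
    then have k: "k < n" by simp
    have lt: "tt k < tt (Suc k)" using tt(3) k by blast
    have "(\<lambda>l. \<phi> (\<alpha> l)) integrable_on {tt k..tt (Suc k)}"
    proof (rule integrable_spike_finite[of "{tt (Suc k)}" _ _ "\<lambda>l. \<phi> (\<alpha> (tt k))"])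
      fix x assume "x \<in> {tt k..tt (Suc k)} - {tt (Suc k)}"
      then have "x \<in> {tt k..<tt (Suc k)}" by auto
      then show "\<phi> (\<alpha> x) = \<phi> (\<alpha> (tt k))" using tt(4) k by metis
    qed auto
    moreover have "0 \<le> tt k" using tt_le[OF tt(3), of 0 k] tt(1) k by simp
    moreover have "(\<lambda>l. \<phi> (\<alpha> l)) integrable_on {0..tt k}" using Suc.IH k by simp
    ultimately show ?case using lt
      by (intro Henstock_Kurzweil_Integration.integrable_combine[where a=0 and c="tt k" and b="tt (Suc k)"]) auto
  qed
  then show ?thesis using tt(2) by (metis order_refl)
qed

lemma HM_integrable_sub:
  fixes \<phi> :: "'a \<Rightarrow> real"
  assumes "\<alpha> \<in> HM X" "0 \<le> a" "b \<le> 1"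
  shows "(\<lambda>l. \<phi> (\<alpha> l)) integrable_on {a..b}"
  by (rule integrable_on_subinterval[OF HM_integrable[OF assms(1)]]) (use assms in auto)

definition Iint :: "('a \<Rightarrow> real) \<Rightarrow> (real \<Rightarrow> 'a) \<Rightarrow> real \<Rightarrow> real \<Rightarrow> real" where
  "Iint \<phi> \<alpha> a b = integral {a..b} (\<lambda>l. \<phi> (\<alpha> l))"

lemma avg_in_SHM:
  assumes "continuous_map X euclideanreal \<phi>" "0 \<le> a" "a < b" "b \<le> 1"
  shows "avg X \<phi> a b \<in> SHM X"
  using assms unfolding SHM_def by blast

lemma emb_avg:
  assumes "\<alpha> \<in> HM X" "continuous_map X euclideanreal \<phi>" "0 \<le> a" "a < b" "b \<le> 1"
  shows "emb X \<alpha> (avg X \<phi> a b) = Iint \<phi> \<alpha> a b / (b - a)"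
  using avg_in_SHM[OF assms(2-)] assms(1) unfolding emb_def Iint_def
  by (simp add: avg_def)

definition Kf :: "'a topology \<Rightarrow> ('a \<Rightarrow> real) \<Rightarrow> real \<Rightarrow> (((real \<Rightarrow> 'a) \<Rightarrow> real) \<Rightarrow> real) \<Rightarrow> real \<Rightarrow> real" where
  "Kf X \<phi> a \<mu> t = (t - a) * \<mu> (avg X \<phi> a t)"

lemma Kf_emb:
  assumes "\<alpha> \<in> HM X" "continuous_map X euclideanreal \<phi>" "0 \<le> a" "a \<le> t" "t \<le> 1"
  shows "Kf X \<phi> a (emb X \<alpha>) t = Iint \<phi> \<alpha> a t"
proof (cases "a = t")
  case True then show ?thesis unfolding Kf_def Iint_def by simp
next
  case False then show ?thesis using emb_avg[OF assms(1,2,3) _ assms(5)] assms(4)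
    unfolding Kf_def by simp
qed

lemma P1_emb:
  assumes "\<alpha> \<in> HM X" "continuous_map X euclideanreal \<phi>" "0 \<le> a" "a < c" "c < b" "b \<le> 1"
  shows "(b - a) * emb X \<alpha> (avg X \<phi> a b) = (c - a) * emb X \<alpha> (avg X \<phi> a c) + (b - c) * emb X \<alpha> (avg X \<phi> c b)"
proof -
  have "Iint \<phi> \<alpha> a c + Iint \<phi> \<alpha> c b = Iint \<phi> \<alpha> a b"
    unfolding Iint_def using assms
    by (intro Henstock_Kurzweil_Integration.integral_combine HM_integrable_sub[OF assms(1)]) auto
  then show ?thesis using assms by (simp add: emb_avg)
qed

lemma P2_emb:
  assumes "\<alpha> \<in> HM X" "continuous_map X euclideanreal \<phi>" "0 \<le> a" "a < b" "b \<le> 1"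
    and M: "\<forall>x\<in>topspace X. \<bar>\<phi> x\<bar> \<le> M"
  shows "\<bar>emb X \<alpha> (avg X \<phi> a b)\<bar> \<le> M"
proof -
  have int: "(\<lambda>l. \<phi> (\<alpha> l)) integrable_on {a..b}" using HM_integrable_sub assms by blast
  have rng: "\<And>l. l \<in> {a..b} \<Longrightarrow> l < 1 \<Longrightarrow> \<bar>\<phi> (\<alpha> l)\<bar> \<le> M"
  proof -
    fix l assume "l \<in> {a..b}" "l < 1"
    then have "l \<in> {0..<1}" using assms(3) by auto
    then have "\<alpha> l \<in> topspace X" using assms(1) unfolding HM_def by blast
    then show "\<bar>\<phi> (\<alpha> l)\<bar> \<le> M" using M by blast
  qed
  have "Iint \<phi> \<alpha> a b = integral {a..b} (\<lambda>l. if l = 1 then 0 else \<phi> (\<alpha> l))"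
    unfolding Iint_def by (rule integral_spike[of "{1}"]) auto
  moreover have int2: "(\<lambda>l. if l = 1 then 0 else \<phi> (\<alpha> l)) integrable_on {a..b}"
    by (rule integrable_spike_finite[OF _ _ int, of "{1}"]) auto
  have M0: "0 \<le> M" using rng[of a] assms(3-5) by (cases "a < 1") auto
  have "integral {a..b} (\<lambda>l. if l = 1 then 0 else \<phi> (\<alpha> l)) \<le> integral {a..b} (\<lambda>l. M)"
    by (rule integral_le[OF int2]) (use rng M0 assms(5) in \<open>fastforce simp: abs_le_iff\<close>)+
  moreover have "integral {a..b} (\<lambda>l. - M) \<le> integral {a..b} (\<lambda>l. if l = 1 then 0 else \<phi> (\<alpha> l))"
    by (rule integral_le[OF _ int2]) (use rng M0 assms(5) in \<open>fastforce simp: abs_le_iff\<close>)+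
  ultimately have "\<bar>Iint \<phi> \<alpha> a b\<bar> \<le> (b - a) * M" using assms(4) by (simp add: abs_le_iff)
  then show ?thesis using emb_avg[OF assms(1-5)] assms(4)
    by (simp add: abs_divide pos_divide_le_eq mult.commute)
qed

definition clamp :: "real \<Rightarrow> real \<Rightarrow> real \<Rightarrow> real" where
  "clamp a b t = max a (min t b)"

definition Fe :: "'a topology \<Rightarrow> ('a \<Rightarrow> real) \<Rightarrow> real \<Rightarrow> real \<Rightarrow>
   (((real \<Rightarrow> 'a) \<Rightarrow> real) \<Rightarrow> real) \<Rightarrow> (((real \<Rightarrow> 'a) \<Rightarrow> real) \<Rightarrow> real) \<Rightarrow> real \<Rightarrow> real" where
  "Fe X \<phi> a b \<mu> \<nu> t = \<nu> (avg X \<phi> a b) + (Kf X \<phi> a \<mu> (clamp a b t) - Kf X \<phi> a \<nu> (clamp a b t)) / (b - a)"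

lemma e1_emb:
  assumes "\<alpha> \<in> HM X" "\<beta> \<in> HM X" "t \<in> {0..1}" "continuous_map X euclideanreal \<phi>" "0 \<le> a" "a < b" "b \<le> 1"
  shows "emb X (e1 \<alpha> \<beta> t) (avg X \<phi> a b) = Fe X \<phi> a b (emb X \<alpha>) (emb X \<beta>) t"
proof -
  define c where "c = clamp a b t"
  have c: "a \<le> c" "c \<le> b" unfolding c_def clamp_def using assms by auto
  have eHM: "e1 \<alpha> \<beta> t \<in> HM X" using e1_HM assms by blast
  have ie: "Iint \<phi> (e1 \<alpha> \<beta> t) a b = Iint \<phi> (e1 \<alpha> \<beta> t) a c + Iint \<phi> (e1 \<alpha> \<beta> t) c b"
    unfolding Iint_def using c assms
    by (intro Henstock_Kurzweil_Integration.integral_combine[symmetric] HM_integrable_sub[OF eHM]) auto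
  have ib: "Iint \<phi> \<beta> a b = Iint \<phi> \<beta> a c + Iint \<phi> \<beta> c b"
    unfolding Iint_def using c assms
    by (intro Henstock_Kurzweil_Integration.integral_combine[symmetric] HM_integrable_sub[OF assms(2)]) auto
  have i1: "Iint \<phi> (e1 \<alpha> \<beta> t) a c = Iint \<phi> \<alpha> a c"
    unfolding Iint_def
  proof (rule integral_spike[of "{c}"])
    fix x assume x: "x \<in> {a..c} - {c}"
    then have "x < t" unfolding c_def clamp_def by auto
    then show "\<phi> (\<alpha> x) = \<phi> (e1 \<alpha> \<beta> t x)" unfolding e1_def by simp
  qed auto
  have i2: "Iint \<phi> (e1 \<alpha> \<beta> t) c b = Iint \<phi> \<beta> c b"
    unfolding Iint_def
  proof (rule integral_spike[of "{c}"])
    fix x assume x: "x \<in> {c..b} - {c}"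
    then have "\<not> x < t" unfolding c_def clamp_def by auto
    then show "\<phi> (\<beta> x) = \<phi> (e1 \<alpha> \<beta> t x)" unfolding e1_def by simp
  qed auto
  have "emb X (e1 \<alpha> \<beta> t) (avg X \<phi> a b) = Iint \<phi> (e1 \<alpha> \<beta> t) a b / (b - a)"
    using emb_avg[OF eHM assms(4-)] .
  also have "\<dots> = (Iint \<phi> \<beta> a b + (Iint \<phi> \<alpha> a c - Iint \<phi> \<beta> a c)) / (b - a)"
    using ie ib i1 i2 by simp
  also have "\<dots> = Fe X \<phi> a b (emb X \<alpha>) (emb X \<beta>) t"
    unfolding Fe_def c_def[symmetric] using assms c
    by (simp add: Kf_emb emb_avg add_divide_distrib diff_divide_distrib)
  finally show ?thesis .
qed

abbreviation PX :: "'a topology \<Rightarrow> (((real \<Rightarrow> 'a) \<Rightarrow> real) \<Rightarrow> real) topology" where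
  "PX X \<equiv> product_topology (\<lambda>_. euclideanreal) (SHM X)"

lemma topspace_HX: "topspace (HXtop X) = PX X closure_of (emb X ` HM X)"
  unfolding HXtop_def topspace_subtopology
  using closure_of_subset_topspace[of "PX X" "emb X ` HM X"] by blast

lemma emb_PX: "emb X \<alpha> \<in> topspace (PX X)"
  unfolding emb_def by simp

lemma emb_HX: "\<alpha> \<in> HM X \<Longrightarrow> emb X \<alpha> \<in> topspace (HXtop X)"
  unfolding topspace_HX using emb_PX by (intro closure_of_subset[THEN subsetD]) auto

lemma HX_sub: "\<mu> \<in> topspace (HXtop X) \<Longrightarrow> \<mu> \<in> topspace (PX X)"
  unfolding HXtop_def by simp

lemma proj_cont: "s \<in> SHM X \<Longrightarrow> continuous_map (PX X) euclideanreal (\<lambda>\<mu>. \<mu> s)"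
  by (rule continuous_map_product_projection)

lemma HX_eq:
  assumes "\<mu> \<in> topspace (HXtop X)" "continuous_map (PX X) euclideanreal g" "continuous_map (PX X) euclideanreal h"
    "\<And>\<alpha>. \<alpha> \<in> HM X \<Longrightarrow> g (emb X \<alpha>) = h (emb X \<alpha>)"
  shows "g \<mu> = h \<mu>"
  using assms(1) unfolding topspace_HX
  by (rule forall_in_closure_of_eq[OF _ _ assms(2,3)]) (use assms(4) in auto)

lemma HX_le:
  assumes "\<mu> \<in> topspace (HXtop X)" "continuous_map (PX X) euclideanreal g" "continuous_map (PX X) euclideanreal h"
    "\<And>\<alpha>. \<alpha> \<in> HM X \<Longrightarrow> g (emb X \<alpha>) \<le> h (emb X \<alpha>)"
  shows "g \<mu> \<le> h \<mu>"
proof -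
  have cl: "closedin (PX X) {x \<in> topspace (PX X). g x - h x \<in> {..0}}"
    by (rule closedin_continuous_map_preimage) (use assms(2,3) in \<open>auto intro: continuous_map_diff\<close>)
  have "g \<mu> - h \<mu> \<in> {..0}"
    using assms(1) unfolding topspace_HX
    by (rule forall_in_closure_of[where P="\<lambda>x. g x - h x \<in> {..0}"]) (use assms(4) cl in auto)
  then show ?thesis by simp
qed

lemma P1_HX:
  assumes "\<mu> \<in> topspace (HXtop X)" "continuous_map X euclideanreal \<phi>" "0 \<le> a" "a < c" "c < b" "b \<le> 1"
  shows "(b - a) * \<mu> (avg X \<phi> a b) = (c - a) * \<mu> (avg X \<phi> a c) + (b - c) * \<mu> (avg X \<phi> c b)"
proof (rule HX_eq[OF assms(1), where g="\<lambda>\<mu>. (b - a) * \<mu> (avg X \<phi> a b)"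
      and h="\<lambda>\<mu>. (c - a) * \<mu> (avg X \<phi> a c) + (b - c) * \<mu> (avg X \<phi> c b)"])
  have s: "avg X \<phi> a b \<in> SHM X" "avg X \<phi> a c \<in> SHM X" "avg X \<phi> c b \<in> SHM X"
    using avg_in_SHM[OF assms(2)] assms by auto
  show "continuous_map (PX X) euclideanreal (\<lambda>\<mu>. (b - a) * \<mu> (avg X \<phi> a b))"
    using s by (intro continuous_intros proj_cont)
  show "continuous_map (PX X) euclideanreal (\<lambda>\<mu>. (c - a) * \<mu> (avg X \<phi> a c) + (b - c) * \<mu> (avg X \<phi> c b))"
    using s by (intro continuous_intros proj_cont)
  show "\<And>\<alpha>. \<alpha> \<in> HM X \<Longrightarrow> (b - a) * emb X \<alpha> (avg X \<phi> a b) = (c - a) * emb X \<alpha> (avg X \<phi> a c) + (b - c) * emb X \<alpha> (avg X \<phi> c b)"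
    using P1_emb assms by blast
qed

lemma P2_HX:
  assumes "\<mu> \<in> topspace (HXtop X)" "continuous_map X euclideanreal \<phi>" "0 \<le> a" "a < b" "b \<le> 1"
    and M: "\<forall>x\<in>topspace X. \<bar>\<phi> x\<bar> \<le> M"
  shows "\<bar>\<mu> (avg X \<phi> a b)\<bar> \<le> M"
proof (rule HX_le[OF assms(1), where g="\<lambda>\<mu>. \<bar>\<mu> (avg X \<phi> a b)\<bar>" and h="\<lambda>_. M"])
  have s: "avg X \<phi> a b \<in> SHM X" using avg_in_SHM[OF assms(2)] assms by auto
  show "continuous_map (PX X) euclideanreal (\<lambda>\<mu>. \<bar>\<mu> (avg X \<phi> a b)\<bar>)"
    using s by (intro continuous_intros proj_cont)
  show "continuous_map (PX X) euclideanreal (\<lambda>_. M)" by simp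
  show "\<And>\<alpha>. \<alpha> \<in> HM X \<Longrightarrow> \<bar>emb X \<alpha> (avg X \<phi> a b)\<bar> \<le> M"
    using P2_emb assms by blast
qed

lemma Lip_HX:
  assumes "\<mu> \<in> topspace (HXtop X)" "continuous_map X euclideanreal \<phi>" "0 \<le> a" "a \<le> t1" "t1 \<le> t2" "t2 \<le> 1"
    and M: "\<forall>x\<in>topspace X. \<bar>\<phi> x\<bar> \<le> M"
  shows "\<bar>Kf X \<phi> a \<mu> t2 - Kf X \<phi> a \<mu> t1\<bar> \<le> M * (t2 - t1)"
proof (cases "t1 = t2")
  case True then show ?thesis by simp
next
  case False
  then have lt: "t1 < t2" using assms by simp
  show ?thesis
  proof (cases "t1 = a")
    case True
    then have "\<bar>Kf X \<phi> a \<mu> t2 - Kf X \<phi> a \<mu> t1\<bar> = (t2 - t1) * \<bar>\<mu> (avg X \<phi> a t2)\<bar>"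
      unfolding Kf_def using lt by (simp add: abs_mult)
    also have "\<dots> \<le> (t2 - t1) * M"
      using P2_HX[OF assms(1,2,3) _ assms(6) M] True lt by (intro mult_left_mono) auto
    finally show ?thesis by (simp add: mult.commute)
  next
    case False
    then have "a < t1" using assms by simp
    have "Kf X \<phi> a \<mu> t2 - Kf X \<phi> a \<mu> t1 = (t2 - t1) * \<mu> (avg X \<phi> t1 t2)"
      using P1_HX[OF assms(1,2,3) \<open>a < t1\<close> lt assms(6)] unfolding Kf_def by simp
    then have "\<bar>Kf X \<phi> a \<mu> t2 - Kf X \<phi> a \<mu> t1\<bar> = (t2 - t1) * \<bar>\<mu> (avg X \<phi> t1 t2)\<bar>"
      using lt by (simp add: abs_mult)
    also have "\<dots> \<le> (t2 - t1) * M"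
      using P2_HX[OF assms(1,2) _ lt assms(6) M] assms lt by (intro mult_left_mono) auto
    finally show ?thesis by (simp add: mult.commute)
  qed
qed

lemma Lip_HX':
  assumes "\<mu> \<in> topspace (HXtop X)" "continuous_map X euclideanreal \<phi>" "0 \<le> a" "a \<le> t1" "t1 \<le> 1" "a \<le> t2" "t2 \<le> 1"
    and M: "\<forall>x\<in>topspace X. \<bar>\<phi> x\<bar> \<le> M"
  shows "\<bar>Kf X \<phi> a \<mu> t2 - Kf X \<phi> a \<mu> t1\<bar> \<le> M * \<bar>t2 - t1\<bar>"
proof (cases "t1 \<le> t2")
  case True then show ?thesis using Lip_HX[OF assms(1-4) True assms(7) M] by simp
next
  case False then show ?thesis using Lip_HX[OF assms(1-3,6) _ assms(5) M] by (simp add: abs_minus_commute)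
qed

lemma cont_real_eps:
  assumes "\<And>z e. z \<in> topspace Z \<Longrightarrow> e > 0 \<Longrightarrow> \<exists>U. openin Z U \<and> z \<in> U \<and> (\<forall>w\<in>U. \<bar>g w - g z\<bar> < e)"
  shows "continuous_map Z euclideanreal g"
  unfolding continuous_map_def
proof (intro conjI allI impI)
  show "g \<in> topspace Z \<rightarrow> topspace euclideanreal" by simp
  fix V :: "real set" assume "openin euclideanreal V"
  then have V: "open V" by simp
  show "openin Z {x \<in> topspace Z. g x \<in> V}"
  proof (subst openin_subopen, intro ballI)
    fix z assume z: "z \<in> {x \<in> topspace Z. g x \<in> V}"
    then obtain e where e: "e > 0" "ball (g z) e \<subseteq> V" using V open_contains_ball by blast
    have zZ: "z \<in> topspace Z" using z by simp
    obtain U where U: "openin Z U" "z \<in> U" "\<forall>w\<in>U. \<bar>g w - g z\<bar> < e" using assms[OF zZ e(1)] by blast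
    have "U \<subseteq> {x \<in> topspace Z. g x \<in> V}"
    proof
      fix w assume "w \<in> U"
      then have "g w \<in> ball (g z) e" using U by (simp add: dist_real_def abs_minus_commute)
      then show "w \<in> {x \<in> topspace Z. g x \<in> V}" using e U \<open>w \<in> U\<close> openin_subset by blast
    qed
    then show "\<exists>T. openin Z T \<and> z \<in> T \<and> T \<subseteq> {x \<in> topspace Z. g x \<in> V}" using U by blast
  qed
qed

lemma bounded_phi:
  assumes "compact_space X" "continuous_map X euclideanreal \<phi>"
  obtains M where "M > 0" "\<forall>x\<in>topspace X. \<bar>\<phi> x\<bar> \<le> M"
proof -
  have "compactin euclideanreal (\<phi> ` topspace X)"
    using image_compactin assms unfolding compact_space_def by blast
  then have "bounded (\<phi> ` topspace X)" by (simp add: compact_imp_bounded)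
  then obtain M where "\<forall>x\<in>topspace X. \<bar>\<phi> x\<bar> \<le> M" unfolding bounded_real by blast
  then show ?thesis using that[of "\<bar>M\<bar> + 1"] by force
qed

lemma Kf_cont:
  assumes X: "compact_space X" and phi: "continuous_map X euclideanreal \<phi>" and a: "0 \<le> a"
    and p: "continuous_map Z (HXtop X) p" and q: "continuous_map Z euclideanreal q"
    and qr: "\<And>z. z \<in> topspace Z \<Longrightarrow> q z \<in> {a..1}"
  shows "continuous_map Z euclideanreal (\<lambda>z. Kf X \<phi> a (p z) (q z))"
proof -
  obtain M where M0: "M > 0" and M: "\<forall>x\<in>topspace X. \<bar>\<phi> x\<bar> \<le> M" using bounded_phi[OF X phi] .
  have pP: "continuous_map Z (PX X) p" using p unfolding HXtop_def using continuous_map_into_fulltopology by blast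
  have pH: "\<And>z. z \<in> topspace Z \<Longrightarrow> p z \<in> topspace (HXtop X)"
    using p continuous_map_image_subset_topspace by blast
  show ?thesis
  proof (rule cont_real_eps)
    fix z0 and e :: real assume z0: "z0 \<in> topspace Z" and e: "e > 0"
    define t0 where "t0 = q z0"
    have t0: "a \<le> t0" "t0 \<le> 1" using qr[OF z0] unfolding t0_def by auto
    define g0 where "g0 z = Kf X \<phi> a (p z) t0" for z
    have g0c: "continuous_map Z euclideanreal g0"
    proof (cases "t0 = a")
      case True then show ?thesis unfolding g0_def Kf_def by simp
    next
      case False
      then have s: "avg X \<phi> a t0 \<in> SHM X" using avg_in_SHM[OF phi a] t0 by simp
      have "continuous_map Z euclideanreal (\<lambda>z. p z (avg X \<phi> a t0))"
        using continuous_map_compose[OF pP proj_cont[OF s]] by (simp add: o_def)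
      then show ?thesis unfolding g0_def Kf_def by (intro continuous_intros)
    qed
    define U1 where "U1 = {z \<in> topspace Z. g0 z \<in> ball (g0 z0) (e/2)}"
    define U2 where "U2 = {z \<in> topspace Z. q z \<in> ball t0 (e/(2*M))}"
    have o1: "openin Z U1" unfolding U1_def by (rule openin_continuous_map_preimage[OF g0c]) simp
    have o2: "openin Z U2" unfolding U2_def by (rule openin_continuous_map_preimage[OF q]) simp
    have in12: "z0 \<in> U1 \<inter> U2" unfolding U1_def U2_def t0_def using z0 e M0 by auto
    have "\<forall>w\<in>U1 \<inter> U2. \<bar>Kf X \<phi> a (p w) (q w) - Kf X \<phi> a (p z0) (q z0)\<bar> < e"
    proof
      fix w assume w: "w \<in> U1 \<inter> U2"
      then have wZ: "w \<in> topspace Z" unfolding U1_def by auto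
      have d1: "\<bar>g0 w - g0 z0\<bar> < e/2" using w unfolding U1_def by (simp add: dist_real_def abs_minus_commute)
      have d2: "\<bar>q w - t0\<bar> < e/(2*M)" using w unfolding U2_def by (simp add: dist_real_def abs_minus_commute)
      have "\<bar>Kf X \<phi> a (p w) (q w) - Kf X \<phi> a (p w) t0\<bar> \<le> M * \<bar>q w - t0\<bar>"
        using Lip_HX'[OF pH[OF wZ] phi a t0 _ _ M] qr[OF wZ] by simp
      also have "\<dots> \<le> M * (e/(2*M))" using d2 M0 by (intro mult_left_mono) auto
      also have "\<dots> = e/2" using M0 by simp
      finally have "\<bar>Kf X \<phi> a (p w) (q w) - Kf X \<phi> a (p w) t0\<bar> \<le> e/2" .
      then show "\<bar>Kf X \<phi> a (p w) (q w) - Kf X \<phi> a (p z0) (q z0)\<bar> < e"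
        using d1 unfolding g0_def t0_def by linarith
    qed
    then show "\<exists>U. openin Z U \<and> z0 \<in> U \<and> (\<forall>w\<in>U. \<bar>Kf X \<phi> a (p w) (q w) - Kf X \<phi> a (p z0) (q z0)\<bar> < e)"
      using o1 o2 in12 by blast
  qed
qed

abbreviation DD :: "'a topology \<Rightarrow> _ topology" where
  "DD X \<equiv> prod_topology (HXtop X) (prod_topology (HXtop X) (top_of_set {0..1::real}))"

abbreviation valid where
  "valid X \<phi> a b \<equiv> continuous_map X euclideanreal \<phi> \<and> 0 \<le> a \<and> a < b \<and> (b::real) \<le> 1"

lemma HX_closure: "HXtop X closure_of (emb X ` HM X) = topspace (HXtop X)"
proof -
  have sub: "emb X ` HM X \<subseteq> PX X closure_of (emb X ` HM X)" using emb_HX topspace_HX by blast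
  then have eq: "PX X closure_of (emb X ` HM X) \<inter> emb X ` HM X = emb X ` HM X" by blast
  show ?thesis
    unfolding topspace_HX unfolding HXtop_def closure_of_subtopology eq by simp
qed

lemma DD_closure: "DD X closure_of (emb X ` HM X \<times> (emb X ` HM X \<times> {0..1})) = topspace (DD X)"
proof -
  have "top_of_set {0..1::real} closure_of {0..1} = {0..1}"
    using closure_of_topspace[of "top_of_set {0..1::real}"] by simp
  then show ?thesis by (simp add: closure_of_Times HX_closure)
qed

lemma HX_cont_PX: "continuous_map Z (HXtop X) p \<Longrightarrow> continuous_map Z (PX X) p"
  unfolding HXtop_def using continuous_map_into_fulltopology by blast

lemma HX_coord_cont:
  assumes "continuous_map Z (HXtop X) p" "s \<in> SHM X"
  shows "continuous_map Z euclideanreal (\<lambda>z. p z s)"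
  using continuous_map_compose[OF HX_cont_PX[OF assms(1)] proj_cont[OF assms(2)]] by (simp add: o_def)

lemma into_HX:
  assumes "continuous_map Z (PX X) g" "g ` topspace Z \<subseteq> PX X closure_of (emb X ` HM X)"
  shows "continuous_map Z (HXtop X) g"
  using assms unfolding HXtop_def continuous_map_in_subtopology by (simp add: image_subset_iff_funcset)

lemma Fe_cont:
  assumes X: "compact_space X" and v: "valid X \<phi> a b"
  shows "continuous_map (DD X) euclideanreal (\<lambda>x. Fe X \<phi> a b (fst x) (fst (snd x)) (snd (snd x)))"
proof -
  have c1: "continuous_map (DD X) (HXtop X) fst" by (rule continuous_map_fst)
  have c2: "continuous_map (DD X) (HXtop X) (\<lambda>x. fst (snd x))"
    using continuous_map_compose[OF continuous_map_snd continuous_map_fst] by (simp add: o_def)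
  have c3: "continuous_map (DD X) euclideanreal (\<lambda>x. snd (snd x))"
  proof -
    have "continuous_map (DD X) (top_of_set {0..1}) (\<lambda>x. snd (snd x))"
      using continuous_map_compose[OF continuous_map_snd continuous_map_snd, of "HXtop X" "HXtop X" "top_of_set {0..1::real}"]
      by (simp add: o_def)
    then show ?thesis using continuous_map_into_fulltopology by blast
  qed
  have cq: "continuous_map (DD X) euclideanreal (\<lambda>x. clamp a b (snd (snd x)))"
    unfolding clamp_def using c3 by (intro continuous_intros)
  have qr: "\<And>x. clamp a b (snd (snd x)) \<in> {a..1}" unfolding clamp_def using v by auto
  have s: "avg X \<phi> a b \<in> SHM X" using avg_in_SHM v by blast
  have k1: "continuous_map (DD X) euclideanreal (\<lambda>x. Kf X \<phi> a (fst x) (clamp a b (snd (snd x))))"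
    using Kf_cont[OF X _ _ c1 cq qr] v by blast
  have k2: "continuous_map (DD X) euclideanreal (\<lambda>x. Kf X \<phi> a (fst (snd x)) (clamp a b (snd (snd x))))"
    using Kf_cont[OF X _ _ c2 cq qr] v by blast
  show ?thesis unfolding Fe_def
    using HX_coord_cont[OF c2 s] k1 k2 v by (intro continuous_intros) auto
qed

definition repr :: "'a topology \<Rightarrow> ((real \<Rightarrow> 'a) \<Rightarrow> real) \<Rightarrow> ('a \<Rightarrow> real) \<times> real \<times> real" where
  "repr X s = (SOME (\<phi>, a, b). s = avg X \<phi> a b \<and> valid X \<phi> a b)"

lemma repr:
  assumes "s \<in> SHM X"
  shows "s = avg X (fst (repr X s)) (fst (snd (repr X s))) (snd (snd (repr X s)))
    \<and> valid X (fst (repr X s)) (fst (snd (repr X s))) (snd (snd (repr X s)))"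
proof -
  obtain \<phi> a b where "s = avg X \<phi> a b \<and> valid X \<phi> a b" using assms unfolding SHM_def by blast
  then have "\<exists>r. (case r of (\<phi>, a, b) \<Rightarrow> s = avg X \<phi> a b \<and> valid X \<phi> a b)" by auto
  then have "case repr X s of (\<phi>, a, b) \<Rightarrow> s = avg X \<phi> a b \<and> valid X \<phi> a b"
    unfolding repr_def by (rule someI_ex)
  then show ?thesis by (simp add: case_prod_beta)
qed

definition EE :: "'a topology \<Rightarrow> _" where
  "EE X x = restrict (\<lambda>s. Fe X (fst (repr X s)) (fst (snd (repr X s))) (snd (snd (repr X s)))
       (fst x) (fst (snd x)) (snd (snd x))) (SHM X)"

lemma EE_emb:
  assumes "\<alpha>1 \<in> HM X" "\<alpha>2 \<in> HM X" "t \<in> {0..1}"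
  shows "EE X (emb X \<alpha>1, (emb X \<alpha>2, t)) = emb X (e1 \<alpha>1 \<alpha>2 t)"
  unfolding EE_def emb_def[of X "e1 \<alpha>1 \<alpha>2 t"]
proof (rule restrict_ext)
  fix s assume s: "s \<in> SHM X"
  note r = repr[OF s]
  have "s (e1 \<alpha>1 \<alpha>2 t) = emb X (e1 \<alpha>1 \<alpha>2 t) s" using s unfolding emb_def by simp
  also have "\<dots> = Fe X (fst (repr X s)) (fst (snd (repr X s))) (snd (snd (repr X s))) (emb X \<alpha>1) (emb X \<alpha>2) t"
    using e1_emb[OF assms, of "fst (repr X s)" "fst (snd (repr X s))" "snd (snd (repr X s))"] r by metis
  finally show "Fe X (fst (repr X s)) (fst (snd (repr X s))) (snd (snd (repr X s)))
       (fst (emb X \<alpha>1, emb X \<alpha>2, t)) (fst (snd (emb X \<alpha>1, emb X \<alpha>2, t))) (snd (snd (emb X \<alpha>1, emb X \<alpha>2, t)))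
     = s (e1 \<alpha>1 \<alpha>2 t)" by simp
qed

lemma EE_cont:
  assumes X: "compact_space X"
  shows "continuous_map (DD X) (HXtop X) (EE X)"
proof -
  have cP: "continuous_map (DD X) (PX X) (EE X)"
    unfolding continuous_map_componentwise
  proof (intro conjI ballI)
    show "EE X ` topspace (DD X) \<subseteq> extensional (SHM X)" unfolding EE_def by auto
  next
    fix s assume s: "s \<in> SHM X"
    note r = repr[OF s]
    have "continuous_map (DD X) euclideanreal (\<lambda>x. Fe X (fst (repr X s)) (fst (snd (repr X s))) (snd (snd (repr X s)))
       (fst x) (fst (snd x)) (snd (snd x)))"
      using Fe_cont[OF X] r by blast
    then show "continuous_map (DD X) euclideanreal (\<lambda>x. EE X x s)"
      unfolding EE_def using s by simp
  qed
  have "EE X ` topspace (DD X) \<subseteq> PX X closure_of (EE X ` (emb X ` HM X \<times> (emb X ` HM X \<times> {0..1})))"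
    using continuous_map_image_closure_subset[OF cP] DD_closure by metis
  also have "\<dots> \<subseteq> PX X closure_of (emb X ` HM X)"
  proof (rule closure_of_mono)
    show "EE X ` (emb X ` HM X \<times> (emb X ` HM X \<times> {0..1})) \<subseteq> emb X ` HM X"
      using EE_emb e1_HM by fastforce
  qed
  finally show ?thesis using cP into_HX by blast
qed

lemma ext_e_spec:
  assumes X: "compact_space X"
  shows "continuous_map (DD X) (HXtop X) (ext_e X) \<and>
      (\<forall>\<alpha>1\<in>HM X. \<forall>\<alpha>2\<in>HM X. \<forall>t\<in>{0..1}. ext_e X (emb X \<alpha>1, (emb X \<alpha>2, t)) = emb X (e1 \<alpha>1 \<alpha>2 t))"
  unfolding ext_e_def
  by (rule someI[where x="EE X"]) (use EE_cont[OF X] EE_emb in blast)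

lemma ext_e_coord:
  assumes X: "compact_space X" and v: "valid X \<phi> a b"
    and x: "x \<in> topspace (DD X)"
  shows "ext_e X x (avg X \<phi> a b) = Fe X \<phi> a b (fst x) (fst (snd x)) (snd (snd x))"
proof -
  note sp = ext_e_spec[OF X]
  have s: "avg X \<phi> a b \<in> SHM X" using avg_in_SHM v by blast
  show ?thesis
  proof (rule forall_in_closure_of_eq[of x "DD X" "emb X ` HM X \<times> (emb X ` HM X \<times> {0..1::real})" euclideanreal])
    show "x \<in> DD X closure_of (emb X ` HM X \<times> (emb X ` HM X \<times> {0..1}))" using x DD_closure by metis
    show "continuous_map (DD X) euclideanreal (\<lambda>x. ext_e X x (avg X \<phi> a b))"
      using HX_coord_cont[OF conjunct1[OF sp] s] .
    show "continuous_map (DD X) euclideanreal (\<lambda>x. Fe X \<phi> a b (fst x) (fst (snd x)) (snd (snd x)))"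
      using Fe_cont[OF X v] .
  next
    fix y assume "y \<in> emb X ` HM X \<times> (emb X ` HM X \<times> {0..1::real})"
    then obtain \<alpha>1 \<alpha>2 t where y: "y = (emb X \<alpha>1, (emb X \<alpha>2, t))" "\<alpha>1 \<in> HM X" "\<alpha>2 \<in> HM X" "t \<in> {0..1}"
      by auto
    then show "ext_e X y (avg X \<phi> a b) = Fe X \<phi> a b (fst y) (fst (snd y)) (snd (snd y))"
      using sp e1_emb[OF y(2-4)] v by simp
  qed simp
qed

lemma ext_e_in:
  assumes X: "compact_space X" and x: "x \<in> topspace (DD X)"
  shows "ext_e X x \<in> topspace (HXtop X)"
  using ext_e_spec[OF X] x continuous_map_image_subset_topspace by blast

lemma comp_HM:
  assumes "\<alpha> \<in> HM X" "continuous_map X Y f"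
  shows "f \<circ> \<alpha> \<in> HM Y"
proof -
  have "(f \<circ> \<alpha>) ` {0..<1} \<subseteq> topspace Y"
    using assms unfolding HM_def continuous_map_def by (auto simp: Pi_iff)
  moreover obtain n tt where tt: "tt 0 = 0" "tt n = 1" "\<forall>i<n. tt i < tt (Suc i)"
     "\<forall>i<n. \<forall>l\<in>{tt i..<tt (Suc i)}. \<alpha> l = \<alpha> (tt i)"
    using assms(1) unfolding HM_def by blast
  moreover have "\<forall>i<n. \<forall>l\<in>{tt i..<tt (Suc i)}. (f \<circ> \<alpha>) l = (f \<circ> \<alpha>) (tt i)"
  proof (intro allI impI ballI)
    fix i l assume "i < n" "l \<in> {tt i..<tt (Suc i)}"
    then have "\<alpha> l = \<alpha> (tt i)" using tt(4) by blast
    then show "(f \<circ> \<alpha>) l = (f \<circ> \<alpha>) (tt i)" by simp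
  qed
  ultimately show ?thesis unfolding HM_def
    by (intro CollectI conjI exI[of _ n] exI[of _ tt]) (assumption | rule tt)+
qed

lemma emb_comp:
  assumes "\<alpha> \<in> HM X" "continuous_map X Y f" "valid Y \<phi> a b"
  shows "emb X \<alpha> (avg X (\<phi> \<circ> f) a b) = emb Y (f \<circ> \<alpha>) (avg Y \<phi> a b)"
proof -
  have v: "valid X (\<phi> \<circ> f) a b" using assms continuous_map_compose by blast
  have "Iint (\<phi> \<circ> f) \<alpha> a b = Iint \<phi> (f \<circ> \<alpha>) a b" unfolding Iint_def by simp
  then show ?thesis using emb_avg[OF assms(1)] emb_avg[OF comp_HM[OF assms(1,2)]] v assms(3) by simp
qed

definition HfE :: "'a topology \<Rightarrow> 'b topology \<Rightarrow> ('a \<Rightarrow> 'b) \<Rightarrow> _" where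
  "HfE X Y f \<mu> = restrict (\<lambda>s. \<mu> (avg X (fst (repr Y s) \<circ> f) (fst (snd (repr Y s))) (snd (snd (repr Y s))))) (SHM Y)"

lemma HfE_coord:
  assumes "\<mu> \<in> topspace (HXtop X)" "continuous_map X Y f" "valid Y \<phi> a b"
  shows "HfE X Y f \<mu> (avg Y \<phi> a b) = \<mu> (avg X (\<phi> \<circ> f) a b)"
proof -
  define s where "s = avg Y \<phi> a b"
  have s: "s \<in> SHM Y" unfolding s_def using avg_in_SHM assms(3) by blast
  note r = repr[OF s]
  define \<psi> a' b' where "\<psi> = fst (repr Y s)" "a' = fst (snd (repr Y s))" "b' = snd (snd (repr Y s))"
  have r': "s = avg Y \<psi> a' b'" "valid Y \<psi> a' b'" using r unfolding \<psi>_a'_b'_def by auto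
  have v1: "valid X (\<phi> \<circ> f) a b" "valid X (\<psi> \<circ> f) a' b'"
    using assms(2,3) r'(2) continuous_map_compose by blast+
  have "\<mu> (avg X (\<psi> \<circ> f) a' b') = \<mu> (avg X (\<phi> \<circ> f) a b)"
  proof (rule HX_eq[OF assms(1)])
    show "continuous_map (PX X) euclideanreal (\<lambda>\<mu>. \<mu> (avg X (\<psi> \<circ> f) a' b'))"
      using v1 avg_in_SHM proj_cont by blast
    show "continuous_map (PX X) euclideanreal (\<lambda>\<mu>. \<mu> (avg X (\<phi> \<circ> f) a b))"
      using v1 avg_in_SHM proj_cont by blast
    fix \<alpha> assume "\<alpha> \<in> HM X"
    then show "emb X \<alpha> (avg X (\<psi> \<circ> f) a' b') = emb X \<alpha> (avg X (\<phi> \<circ> f) a b)"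
      using emb_comp[OF _ assms(2) r'(2)] emb_comp[OF _ assms(2) assms(3)] r'(1) s_def by metis
  qed
  then show ?thesis unfolding HfE_def using s unfolding s_def[symmetric] \<psi>_a'_b'_def by simp
qed

lemma HfE_emb:
  assumes "\<alpha> \<in> HM X" "continuous_map X Y f"
  shows "HfE X Y f (emb X \<alpha>) = emb Y (f \<circ> \<alpha>)"
  unfolding HfE_def emb_def[of Y]
proof (rule restrict_ext)
  fix s assume s: "s \<in> SHM Y"
  note r = repr[OF s]
  then show "emb X \<alpha> (avg X (fst (repr Y s) \<circ> f) (fst (snd (repr Y s))) (snd (snd (repr Y s)))) = s (f \<circ> \<alpha>)"
    using emb_comp[OF assms, of "fst (repr Y s)" "fst (snd (repr Y s))" "snd (snd (repr Y s))"] s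
    unfolding emb_def by (metis restrict_apply')
qed

lemma HfE_cont:
  assumes f: "continuous_map X Y f"
  shows "continuous_map (HXtop X) (HXtop Y) (HfE X Y f)"
proof -
  have cP: "continuous_map (PX X) (PX Y) (HfE X Y f)"
    unfolding continuous_map_componentwise
  proof (intro conjI ballI)
    show "HfE X Y f ` topspace (PX X) \<subseteq> extensional (SHM Y)" unfolding HfE_def by auto
  next
    fix s assume s: "s \<in> SHM Y"
    note r = repr[OF s]
    have "avg X (fst (repr Y s) \<circ> f) (fst (snd (repr Y s))) (snd (snd (repr Y s))) \<in> SHM X"
      using r f continuous_map_compose avg_in_SHM by blast
    then show "continuous_map (PX X) euclideanreal (\<lambda>x. HfE X Y f x s)"
      unfolding HfE_def using s proj_cont by simp
  qed
  have "HfE X Y f ` topspace (HXtop X) \<subseteq> PX Y closure_of (HfE X Y f ` (emb X ` HM X))"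
    unfolding topspace_HX by (rule continuous_map_image_closure_subset[OF cP])
  also have "\<dots> \<subseteq> PX Y closure_of (emb Y ` HM Y)"
    by (rule closure_of_mono) (use HfE_emb[OF _ f] comp_HM[OF _ f] in auto)
  finally show ?thesis
    using into_HX[OF continuous_map_from_subtopology[OF cP], of "PX X closure_of emb X ` HM X"]
    unfolding HXtop_def[of X] by blast
qed

lemma Hf_spec:
  assumes f: "continuous_map X Y f"
  shows "continuous_map (HXtop X) (HXtop Y) (Hf X Y f) \<and>
      (\<forall>\<phi> a b. continuous_map Y euclideanreal \<phi> \<and> 0 \<le> a \<and> a < b \<and> b \<le> 1 \<longrightarrow>
         (\<forall>\<mu>\<in>topspace (HXtop X). Hf X Y f \<mu> (avg Y \<phi> a b) = \<mu> (avg X (\<phi> \<circ> f) a b)))"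
  unfolding Hf_def
  by (rule someI[where x="HfE X Y f"]) (use HfE_cont[OF f] HfE_coord[OF _ f] in blast)

theorem lemma3p1:
  fixes X :: "'a topology" and Y :: "'b topology" and f :: "'a \<Rightarrow> 'b"
  assumes "compact_space X" "Hausdorff_space X"
    and "compact_space Y" "Hausdorff_space Y"
    and "continuous_map X Y f" "f ` topspace X = topspace Y"
    and "\<mu> \<in> topspace (HXtop X)" "\<nu> \<in> topspace (HXtop X)" "t \<in> {0..1::real}"
  shows "ext_e Y (Hf X Y f \<mu>, (Hf X Y f \<nu>, t)) = Hf X Y f (ext_e X (\<mu>, (\<nu>, t)))"
proof -
  note hs = Hf_spec[OF assms(5)]
  have m: "Hf X Y f \<mu> \<in> topspace (HXtop Y)" "Hf X Y f \<nu> \<in> topspace (HXtop Y)"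
    using hs assms(7,8) continuous_map_image_subset_topspace by blast+
  have xY: "(Hf X Y f \<mu>, (Hf X Y f \<nu>, t)) \<in> topspace (DD Y)" using m assms(9) by simp
  have xX: "(\<mu>, (\<nu>, t)) \<in> topspace (DD X)" using assms(7-9) by simp
  have L: "ext_e Y (Hf X Y f \<mu>, (Hf X Y f \<nu>, t)) \<in> topspace (HXtop Y)"
    using ext_e_in[OF assms(3) xY] .
  have eX: "ext_e X (\<mu>, (\<nu>, t)) \<in> topspace (HXtop X)" using ext_e_in[OF assms(1) xX] .
  have R: "Hf X Y f (ext_e X (\<mu>, (\<nu>, t))) \<in> topspace (HXtop Y)"
    using hs eX continuous_map_image_subset_topspace by blast
  have Kf_eq: "Kf Y \<phi> a (Hf X Y f \<rho>) c = Kf X (\<phi> \<circ> f) a \<rho> c"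
    if "valid Y \<phi> a b" "\<rho> \<in> topspace (HXtop X)" "a \<le> c" "c \<le> b" for \<phi> a b c \<rho>
  proof (cases "c = a")
    case True then show ?thesis unfolding Kf_def by simp
  next
    case False
    then have "Hf X Y f \<rho> (avg Y \<phi> a c) = \<rho> (avg X (\<phi> \<circ> f) a c)"
      using hs that by auto
    then show ?thesis unfolding Kf_def by simp
  qed
  show ?thesis
  proof (rule PiE_ext)
    show "ext_e Y (Hf X Y f \<mu>, (Hf X Y f \<nu>, t)) \<in> SHM Y \<rightarrow>\<^sub>E UNIV"
      using HX_sub[OF L] by simp
    show "Hf X Y f (ext_e X (\<mu>, (\<nu>, t))) \<in> SHM Y \<rightarrow>\<^sub>E UNIV"
      using HX_sub[OF R] by simp
  next
    fix s assume "s \<in> SHM Y"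
    then obtain \<phi> a b where s: "s = avg Y \<phi> a b" and v: "valid Y \<phi> a b" unfolding SHM_def by blast
    have vX: "valid X (\<phi> \<circ> f) a b" using v assms(5) continuous_map_compose by blast
    have cl: "a \<le> clamp a b t" "clamp a b t \<le> b" unfolding clamp_def using v by auto
    have "ext_e Y (Hf X Y f \<mu>, (Hf X Y f \<nu>, t)) s = Fe Y \<phi> a b (Hf X Y f \<mu>) (Hf X Y f \<nu>) t"
      unfolding s using ext_e_coord[OF assms(3) v xY] by simp
    also have "\<dots> = Fe X (\<phi> \<circ> f) a b \<mu> \<nu> t"
      unfolding Fe_def using Kf_eq[OF v assms(7) cl] Kf_eq[OF v assms(8) cl] hs v assms(8) by simp
    also have "\<dots> = ext_e X (\<mu>, (\<nu>, t)) (avg X (\<phi> \<circ> f) a b)"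
      using ext_e_coord[OF assms(1) vX xX] by simp
    also have "\<dots> = Hf X Y f (ext_e X (\<mu>, (\<nu>, t))) s"
      unfolding s using hs v eX by simp
    finally show "ext_e Y (Hf X Y f \<mu>, (Hf X Y f \<nu>, t)) s = Hf X Y f (ext_e X (\<mu>, (\<nu>, t))) s" .
  qed
qed

end
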